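(* Let $A_1\in\mathbb R^{n_1\times n_1}$, $A_2\in\mathbb R^{n_2\times n_2}$ be symmetric positive definite with spectra contained in $[\alpha_1,\beta_1]$ and $[\alpha_2,\beta_2]$ respectively ($0<\alpha_i\le\beta_i$), let $B\in\mathbb R^{n_1\times n_2}$, let $\epsilon>0$ and set $\kappa:=\frac{\beta_1+\beta_2}{\alpha_1+\alpha_2}$, assuming $\kappa\epsilon<1$. Let $A_i^{(h)}$, $h=0,\dots,\ell$, be the level-$h$ block-diagonal parts of $A_i$ (see context). Suppose matrices $\widetilde X^{(\ell)}$ and $\delta\widetilde X^{(h)}$, $h=\ell-1,\dots,0$, of size $n_1\times n_2$ are given, and define $$R^{(\ell)}:=A_1^{(\ell)}\widetilde X^{(\ell)}+\widetilde X^{(\ell)}A_2^{(\ell)}-B,$$ and, for $h=\ell-1,\dots,0$, with $\widetilde X^{(h+1)}:=\widetilde X^{(\ell)}+\delta\widetilde X^{(\ell-1)}+\dots+\delta\widetilde X^{(h+1)}$, $$\widetilde\Xi^{(h)}:=-(A_1^{(h)}-A_1^{(h+1)})\widetilde X^{(h+1)}-\widetilde X^{(h+1)}(A_2^{(h)}-A_2^{(h+1)}),\qquad R^{(h)}:=A_1^{(h)}\delta\widetilde X^{(h)}+\delta\widetilde X^{(h)}A_2^{(h)}-\widetilde\Xi^{(h)}.$$ Assume $\|R^{(\ell)}\|_F\le\epsilon\|B\|_F$ and $\|R^{(h)}\|_F\le\epsilon\|\widetilde\Xi^{(h)}\|_F$ for $h<\ell$. Then for every $h=0,\dots,\ell$,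 the matrix $\widetilde X^{(h)}:=\widetilde X^{(\ell)}+\delta\widetilde X^{(\ell-1)}+\dots+\delta\widetilde X^{(h)}$ satisfies $$A_1^{(h)}\widetilde X^{(h)}+\widetilde X^{(h)}A_2^{(h)}=B+R^{(\ell)}+\dots+R^{(h)},$$ and $$\|R^{(h)}\|_F\le\kappa\epsilon(1+\epsilon)(1+\kappa\epsilon)^{\ell-h-1}\|B\|_F.$$
   Context: For $i=1,2$, fix a sequence of nested partitions of $\{1,\dots,n_i\}$ into sets of contiguous indices at levels $h=0,1,\dots,\ell$: level $0$ is the trivial partition $\{1,\dots,n_i\}$, and each set at level $h+1$ is obtained by splitting a set of level $h$ into two contiguous parts (one of which may be empty). $A_i^{(h)}$ denotes the block-diagonal matrix obtained from $A_i$ by keeping the entries whose row and column indices lie in the same set of the level-$h$ partition and setting all other entries to zero; in particular $A_i^{(0)}=A_i$, and $A_i^{(h)}-A_i^{(h+1)}$ consists of the off-diagonal blocks uncovered at level $h+1$. $\|\cdot\|_F$ is the Frobenius norm. *)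

theory Defs
  imports "Jordan_Normal_Form.Char_Poly"
begin

definition frob_norm :: "real mat \<Rightarrow> real" where
  "frob_norm A = sqrt (\<Sum>i<dim_row A. \<Sum>j<dim_col A. (A $$ (i, j))\<^sup>2)"

definition sym_mat :: "real mat \<Rightarrow> bool" where
  "sym_mat A \<longleftrightarrow> A = transpose_mat A"

definition pos_def_mat :: "real mat \<Rightarrow> bool" where
  "pos_def_mat A \<longleftrightarrow> sym_mat A \<and>
     (\<forall>x \<in> carrier_vec (dim_row A). x \<noteq> 0\<^sub>v (dim_row A) \<longrightarrow> x \<bullet> (A *\<^sub>v x) > 0)"

definition spectrum_in :: "real mat \<Rightarrow> real \<Rightarrow> real \<Rightarrow> bool" where
  "spectrum_in A a b \<longleftrightarrow> (\<forall>mu. eigenvalue A mu \<longrightarrow> a \<le> mu \<and> mu \<le> b)"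

definition split_into :: "nat set \<Rightarrow> nat set \<Rightarrow> nat set \<Rightarrow> bool" where
  "split_into S S1 S2 \<longleftrightarrow> S1 \<union> S2 = S \<and> (\<forall>x\<in>S1. \<forall>y\<in>S2. x < y)"

text \<open>P h is the level-h partition of {0..<n} (0-based indices), for h = 0..l:
  level 0 is the trivial partition, each set at level h+1 arises by splitting a set
  at level h into two contiguous parts.\<close>
definition nested_partitions :: "nat \<Rightarrow> nat \<Rightarrow> (nat \<Rightarrow> nat set set) \<Rightarrow> bool" where
  "nested_partitions n l P \<longleftrightarrow> P 0 = {{0..<n}} \<and>
     (\<forall>h<l. \<exists>f :: nat set \<Rightarrow> nat set \<times> nat set.
        (\<forall>S\<in>P h. split_into S (fst (f S)) (snd (f S))) \<and>
        P (Suc h) = (\<Union>S\<in>P h. {fst (f S), snd (f S)}))"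

definition block_part :: "nat set set \<Rightarrow> real mat \<Rightarrow> real mat" where
  "block_part Q A = mat (dim_row A) (dim_col A)
     (\<lambda>(i, j). if \<exists>S\<in>Q. i \<in> S \<and> j \<in> S then A $$ (i, j) else 0)"

definition msum :: "nat \<Rightarrow> nat \<Rightarrow> (nat \<Rightarrow> real mat) \<Rightarrow> nat set \<Rightarrow> real mat" where
  "msum m n F K = mat m n (\<lambda>(i, j). \<Sum>k\<in>K. F k $$ (i, j))"

definition Xacc :: "nat \<Rightarrow> real mat \<Rightarrow> (nat \<Rightarrow> real mat) \<Rightarrow> nat \<Rightarrow> real mat" where
  "Xacc l Xl dX h = Xl + msum (dim_row Xl) (dim_col Xl) dX {h..<l}"

end

theory Submission
  imports Defs "HOL-Analysis.L2_Norm"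
begin

definition bil :: "nat \<Rightarrow> (nat \<Rightarrow> nat \<Rightarrow> real) \<Rightarrow> (nat \<Rightarrow> real) \<Rightarrow> (nat \<Rightarrow> real) \<Rightarrow> real" where
  "bil n a w z = (\<Sum>i<n. \<Sum>j<n. w i * a i j * z j)"

definition nsq :: "nat \<Rightarrow> (nat \<Rightarrow> real) \<Rightarrow> real" where
  "nsq n x = (\<Sum>i<n. (x i)\<^sup>2)"

lemma nsq_nonneg: "nsq n x \<ge> 0"
  unfolding nsq_def by (auto intro: sum_nonneg)

lemma nsq_le: "i < n \<Longrightarrow> (x i)\<^sup>2 \<le> nsq n x"
  unfolding nsq_def by (rule member_le_sum) auto

lemma nsq_zero: "nsq n x = 0 \<Longrightarrow> i < n \<Longrightarrow> x i = 0"
  using nsq_le[of i n x] by simp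

lemma bw:
  fixes m :: nat and x :: "nat \<Rightarrow> nat \<Rightarrow> real"
  assumes "\<And>k i. \<bar>x k i\<bar> \<le> (1::real)"
  shows "\<exists>r y. strict_mono r \<and> (\<forall>i<m. (\<lambda>k. x (r k) i) \<longlonglongrightarrow> y i)"
proof (induction m)
  case 0
  have "strict_mono (id::nat\<Rightarrow>nat)" by (simp add: strict_mono_def)
  then show ?case by auto
next
  case (Suc m)
  then obtain r y where r: "strict_mono r" and y: "\<forall>i<m. (\<lambda>k. x (r k) i) \<longlonglongrightarrow> y i" by blast
  obtain f where f: "strict_mono f" and mf: "monoseq (\<lambda>k. x (r (f k)) m)"
    using seq_monosub[of "\<lambda>k. x (r k) m"] by blast
  have "Bseq (\<lambda>k. x (r (f k)) m)"
    by (rule BseqI'[of _ 1]) (use assms in auto)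
  with mf obtain L where L: "(\<lambda>k. x (r (f k)) m) \<longlonglongrightarrow> L"
    using Bseq_monoseq_convergent convergent_def by blast
  show ?case
  proof (intro exI conjI allI impI)
    show "strict_mono (r \<circ> f)" using r f by (simp add: strict_mono_o)
    fix i assume i: "i < Suc m"
    show "(\<lambda>k. x ((r \<circ> f) k) i) \<longlonglongrightarrow> (y(m := L)) i"
    proof (cases "i = m")
      case True then show ?thesis using L by simp
    next
      case False
      with i have "i < m" by simp
      with y have "(\<lambda>k. x (r k) i) \<longlonglongrightarrow> y i" by blast
      from LIMSEQ_subseq_LIMSEQ[OF this f] False show ?thesis by (simp add: comp_def)
    qed
  qed
qed

lemma bil_expand:
  "bil n a (\<lambda>i. y i + t * u i) (\<lambda>i. y i + t * u i) = bil n a y y + t * (bil n a u y + bil n a y u) + t\<^sup>2 * bil n a u u"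
  unfolding bil_def power2_eq_square
  by (simp add: algebra_simps sum.distrib sum_distrib_left)

lemma nsq_expand:
  "nsq n (\<lambda>i. y i + t * u i) = nsq n y + 2 * t * (\<Sum>i<n. u i * y i) + t\<^sup>2 * nsq n u"
  unfolding nsq_def power2_eq_square
  by (simp add: algebra_simps sum.distrib sum_distrib_left)

lemma bil_sym:
  assumes "\<And>i j. i < n \<Longrightarrow> j < n \<Longrightarrow> a i j = a j i"
  shows "bil n a u y = bil n a y u"
  unfolding bil_def
  by (subst sum.swap) (auto intro!: sum.cong simp: assms mult.commute mult.left_commute)

lemma bil_scale: "bil n a (\<lambda>i. t * x i) (\<lambda>i. t * x i) = t\<^sup>2 * bil n a x x"
  unfolding bil_def power2_eq_square by (simp add: sum_distrib_left algebra_simps)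

lemma nsq_scale: "nsq n (\<lambda>i. t * x i) = t\<^sup>2 * nsq n x"
  unfolding nsq_def by (simp add: sum_distrib_left power_mult_distrib)

lemma bil_cont:
  assumes "\<And>i. i < n \<Longrightarrow> (\<lambda>k. x k i) \<longlonglongrightarrow> y i"
  shows "(\<lambda>k. bil n a (x k) (x k)) \<longlonglongrightarrow> bil n a y y"
  unfolding bil_def
  by (intro tendsto_sum tendsto_mult tendsto_const) (auto simp: assms)

lemma nsq_cont:
  assumes "\<And>i. i < n \<Longrightarrow> (\<lambda>k. x k i) \<longlonglongrightarrow> y i"
  shows "(\<lambda>k. nsq n (x k)) \<longlonglongrightarrow> nsq n y"
  unfolding nsq_def
  by (intro tendsto_sum tendsto_power) (auto simp: assms)

lemma bil_bound:
  assumes "\<And>i. i < n \<Longrightarrow> \<bar>x i\<bar> \<le> 1"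
  shows "\<bar>bil n a x x\<bar> \<le> (\<Sum>i<n. \<Sum>j<n. \<bar>a i j\<bar>)"
  unfolding bil_def
proof -
  have "\<bar>\<Sum>i<n. \<Sum>j<n. x i * a i j * x j\<bar> \<le> (\<Sum>i<n. \<Sum>j<n. \<bar>x i * a i j * x j\<bar>)"
    by (rule order_trans[OF sum_abs sum_mono]) (rule sum_abs)
  also have "\<dots> \<le> (\<Sum>i<n. \<Sum>j<n. \<bar>a i j\<bar>)"
  proof (intro sum_mono)
    fix i j assume "i \<in> {..<n}" "j \<in> {..<n}"
    then have "\<bar>x i\<bar> \<le> 1" "\<bar>x j\<bar> \<le> 1" using assms by auto
    then have "\<bar>x i\<bar> * \<bar>x j\<bar> \<le> 1" by (simp add: mult_le_one)
    then have "\<bar>x i\<bar> * \<bar>x j\<bar> * \<bar>a i j\<bar> \<le> 1 * \<bar>a i j\<bar>"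
      by (intro mult_right_mono) auto
    then show "\<bar>x i * a i j * x j\<bar> \<le> \<bar>a i j\<bar>" by (simp add: abs_mult algebra_simps)
  qed
  finally show "\<bar>\<Sum>i<n. \<Sum>j<n. x i * a i j * x j\<bar> \<le> (\<Sum>i<n. \<Sum>j<n. \<bar>a i j\<bar>)" .
qed

lemma unit_coord: "nsq n x = 1 \<Longrightarrow> i < n \<Longrightarrow> \<bar>x i\<bar> \<le> 1"
  using nsq_le[of i n x] by (simp add: abs_square_le_1)

lemma min_eig:
  fixes a :: "nat \<Rightarrow> nat \<Rightarrow> real"
  assumes n: "0 < n" and sym: "\<And>i j. i < n \<Longrightarrow> j < n \<Longrightarrow> a i j = a j i"
  shows "\<exists>\<mu> y. nsq n y = 1 \<and> (\<forall>i<n. (\<Sum>j<n. a i j * y j) = \<mu> * y i) \<and> (\<forall>x. \<mu> * nsq n x \<le> bil n a x x)"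
proof -
  define U where "U = {x. nsq n x = 1}"
  define V where "V = (\<lambda>x. bil n a x x) ` U"
  define C where "C = (\<Sum>i<n. \<Sum>j<n. \<bar>a i j\<bar>)"
  define m where "m = Inf V"
  have e0: "(\<lambda>i. if i = 0 then 1 else 0::real) \<in> U"
  proof -
    have "(\<Sum>i<n. (if i = 0 then 1 else 0::real)\<^sup>2) = (\<Sum>i<n. if i = 0 then 1 else 0)"
      by (rule sum.cong) auto
    also have "\<dots> = 1" using n by simp
    finally show ?thesis unfolding U_def nsq_def by simp
  qed
  then have Vne: "V \<noteq> {}" unfolding V_def by auto
  have Vb: "\<And>v. v \<in> V \<Longrightarrow> -C \<le> v"
  proof -
    fix v assume "v \<in> V"
    then obtain x where x: "nsq n x = 1" and v: "v = bil n a x x" unfolding V_def U_def by auto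
    have "\<bar>v\<bar> \<le> C" unfolding v C_def by (rule bil_bound) (use unit_coord[OF x] in auto)
    then show "-C \<le> v" by linarith
  qed
  then have bdd: "bdd_below V" by (auto simp: bdd_below_def)
  have lowm: "\<And>x. nsq n x = 1 \<Longrightarrow> m \<le> bil n a x x"
    unfolding m_def V_def U_def by (rule cInf_lower) (use bdd in \<open>auto simp: V_def U_def\<close>)
  have "\<forall>k. \<exists>x. nsq n x = 1 \<and> bil n a x x < m + 1 / real (Suc k)"
  proof
    fix k
    have "Inf V < m + 1 / real (Suc k)" unfolding m_def by simp
    from cInf_lessD[OF Vne this] show "\<exists>x. nsq n x = 1 \<and> bil n a x x < m + 1 / real (Suc k)"
      unfolding V_def U_def by auto
  qed
  then obtain xs where xs1: "\<And>k. nsq n (xs k) = 1" and xs2: "\<And>k. bil n a (xs k) (xs k) < m + 1 / real (Suc k)"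
    by metis
  define xb where "xb k i = (if i < n then xs k i else 0)" for k i
  have "\<And>k i. \<bar>xb k i\<bar> \<le> 1"
    using unit_coord[OF xs1] unfolding xb_def by auto
  from bw[of xb n, OF this] obtain r y where r: "strict_mono r"
    and y: "\<forall>i<n. (\<lambda>k. xb (r k) i) \<longlonglongrightarrow> y i" by auto
  have yc: "\<And>i. i < n \<Longrightarrow> (\<lambda>k. xs (r k) i) \<longlonglongrightarrow> y i" using y unfolding xb_def by auto
  have lim1: "(\<lambda>k. bil n a (xs (r k)) (xs (r k))) \<longlonglongrightarrow> bil n a y y"
    by (rule bil_cont) (use yc in auto)
  have "(\<lambda>k. bil n a (xs k) (xs k)) \<longlonglongrightarrow> m"
  proof (rule tendsto_sandwich[of "\<lambda>k. m" _ _ "\<lambda>k. m + 1 / real (Suc k)"])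
    show "\<forall>\<^sub>F k in sequentially. m \<le> bil n a (xs k) (xs k)" using lowm xs1 by auto
    show "\<forall>\<^sub>F k in sequentially. bil n a (xs k) (xs k) \<le> m + 1 / real (Suc k)"
      using xs2 less_imp_le by (intro always_eventually allI) blast
    show "(\<lambda>k. m) \<longlonglongrightarrow> m" by simp
    have "(\<lambda>k. 1 / real (Suc k)) \<longlonglongrightarrow> 0" by (rule LIMSEQ_Suc[OF lim_const_over_n])
    then show "(\<lambda>k. m + 1 / real (Suc k)) \<longlonglongrightarrow> m" using tendsto_add[of "\<lambda>k. m" m sequentially] by fastforce
  qed
  from LIMSEQ_subseq_LIMSEQ[OF this r] have "(\<lambda>k. bil n a (xs (r k)) (xs (r k))) \<longlonglongrightarrow> m"
    by (simp add: comp_def)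
  with lim1 have ym: "bil n a y y = m" using LIMSEQ_unique by blast
  have "(\<lambda>k. nsq n (xs (r k))) \<longlonglongrightarrow> nsq n y" by (rule nsq_cont) (use yc in auto)
  then have y1: "nsq n y = 1" using xs1 LIMSEQ_unique[OF _ tendsto_const] by auto
  have glow: "m * nsq n x \<le> bil n a x x" for x
  proof (cases "nsq n x = 0")
    case True
    then have "bil n a x x = 0" unfolding bil_def using nsq_zero[OF True] by simp
    with True show ?thesis by simp
  next
    case False
    then have pos: "nsq n x > 0" using nsq_nonneg[of n x] by linarith
    define c where "c = 1 / sqrt (nsq n x)"
    have c2: "c\<^sup>2 * nsq n x = 1" using pos unfolding c_def by (simp add: power_divide)
    have "m \<le> bil n a (\<lambda>i. c * x i) (\<lambda>i. c * x i)"
      by (rule lowm) (simp add: nsq_scale c2)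
    then have "m \<le> c\<^sup>2 * bil n a x x" by (simp add: bil_scale)
    then have "m * nsq n x \<le> c\<^sup>2 * bil n a x x * nsq n x" using pos by simp
    also have "\<dots> = bil n a x x" using c2 by (simp add: algebra_simps)
    finally show ?thesis .
  qed
  define w where "w i = (\<Sum>j<n. a i j * y j) - m * y i" for i
  define g where "g x = bil n a x x - m * nsq n x" for x
  have gnn: "g x \<ge> 0" for x using glow[of x] unfolding g_def by simp
  have cross: "bil n a w y = (\<Sum>i<n. w i * (\<Sum>j<n. a i j * y j))"
    unfolding bil_def by (simp add: sum_distrib_left algebra_simps)
  have gexp: "g (\<lambda>i. y i + t * w i) = 2 * t * nsq n w + t\<^sup>2 * g w" for t
  proof -
    have "g (\<lambda>i. y i + t * w i) = g y + 2 * t * (bil n a w y - m * (\<Sum>i<n. w i * y i)) + t\<^sup>2 * g w"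
      unfolding g_def bil_expand nsq_expand using bil_sym[of n a y w, OF sym] by (simp add: algebra_simps)
    also have "bil n a w y - m * (\<Sum>i<n. w i * y i) = nsq n w"
      unfolding cross nsq_def w_def power2_eq_square by (simp add: sum_distrib_left sum_subtractf[symmetric] algebra_simps)
    also have "g y = 0" unfolding g_def ym y1 by simp
    finally show ?thesis by simp
  qed
  have w0: "nsq n w = 0"
  proof (rule ccontr)
    assume "nsq n w \<noteq> 0"
    then have W: "nsq n w > 0" using nsq_nonneg[of n w] by linarith
    define s where "s = nsq n w / (g w + 1)"
    have G: "g w \<ge> 0" by (rule gnn)
    have s: "s > 0" unfolding s_def using W G by simp
    have "0 \<le> g (\<lambda>i. y i + (-s) * w i)" by (rule gnn)
    also have "\<dots> = s * (s * g w - 2 * nsq n w)" unfolding gexp by (simp add: power2_eq_square algebra_simps)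
    finally have "0 \<le> s * g w - 2 * nsq n w" using s by (simp add: zero_le_mult_iff)
    moreover have "s * g w \<le> nsq n w" unfolding s_def using W G by (simp add: field_simps)
    ultimately show False using W by linarith
  qed
  have "\<forall>i<n. (\<Sum>j<n. a i j * y j) = m * y i"
    using nsq_zero[OF w0] unfolding w_def by auto
  with y1 glow show ?thesis by blast
qed


definition cc :: "nat set set \<Rightarrow> nat \<Rightarrow> nat \<Rightarrow> bool" where
  "cc Q i j \<longleftrightarrow> (\<exists>S\<in>Q. i \<in> S \<and> j \<in> S)"

definition ap :: "nat set set \<Rightarrow> (nat \<Rightarrow> nat \<Rightarrow> real) \<Rightarrow> nat \<Rightarrow> nat \<Rightarrow> real" where
  "ap Q a i j = (if cc Q i j then a i j else 0)"

lemma np_disj: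
  assumes P: "nested_partitions n l P"
  shows "h \<le> l \<Longrightarrow> S \<in> P h \<Longrightarrow> T \<in> P h \<Longrightarrow> S \<noteq> T \<Longrightarrow> S \<inter> T = {}"
proof (induction h arbitrary: S T)
  case 0
  have "P 0 = {{0..<n}}" using P unfolding nested_partitions_def by (rule conjunct1)
  then show ?case using 0 by auto
next
  case (Suc h)
  from Suc.prems have hl: "h < l" by simp
  then obtain f where f1: "\<forall>S\<in>P h. split_into S (fst (f S)) (snd (f S))"
    and f2: "P (Suc h) = (\<Union>S\<in>P h. {fst (f S), snd (f S)})"
    using P hl unfolding nested_partitions_def by (elim conjE allE impE exE) auto
  from Suc.prems(2) f2 obtain S' where S': "S' \<in> P h" "S = fst (f S') \<or> S = snd (f S')" by auto
  from Suc.prems(3) f2 obtain T' where T': "T' \<in> P h" "T = fst (f T') \<or> T = snd (f T')" by auto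
  have "split_into S' (fst (f S')) (snd (f S'))" using f1 S'(1) by blast
  then have subS: "S \<subseteq> S'" using S'(2) unfolding split_into_def by blast
  have "split_into T' (fst (f T')) (snd (f T'))" using f1 T'(1) by blast
  then have subT: "T \<subseteq> T'" using T'(2) unfolding split_into_def by blast
  show ?case
  proof (cases "S' = T'")
    case True
    have sp: "split_into S' (fst (f S')) (snd (f S'))" using f1 S'(1) by blast
    have dj: "fst (f S') \<inter> snd (f S') = {}"
    proof (rule ccontr)
      assume "fst (f S') \<inter> snd (f S') \<noteq> {}"
      then obtain z where "z \<in> fst (f S')" "z \<in> snd (f S')" by blast
      with sp show False unfolding split_into_def by blast
    qed
    then show ?thesis using S'(2) T'(2) True Suc.prems(4) by auto
  next
    case False
    then have "S' \<inter> T' = {}" using Suc.IH[OF _ S'(1) T'(1)] hl by simp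
    then show ?thesis using subS subT by auto
  qed
qed

lemma np_split:
  assumes P: "nested_partitions n l P" and hl: "h < l"
  shows "\<exists>d. (\<forall>i. d i = 1 \<or> d i = (-1::real)) \<and> (\<forall>i j. cc (P (Suc h)) i j \<longleftrightarrow> cc (P h) i j \<and> d i = d j)"
proof -
  obtain f where f1: "\<forall>S\<in>P h. split_into S (fst (f S)) (snd (f S))"
    and f2: "P (Suc h) = (\<Union>S\<in>P h. {fst (f S), snd (f S)})"
    using P hl unfolding nested_partitions_def by (elim conjE allE impE exE) auto
  have disj: "\<And>S T. S \<in> P h \<Longrightarrow> T \<in> P h \<Longrightarrow> S \<noteq> T \<Longrightarrow> S \<inter> T = {}"
    using np_disj[OF P, of h] hl by simp
  define d where "d i = (if \<exists>S\<in>P h. i \<in> fst (f S) then 1 else (-1::real))" for i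
  have fst_iff: "d i = 1 \<longleftrightarrow> i \<in> fst (f S)" if S: "S \<in> P h" "i \<in> S" for i S
  proof
    assume "d i = 1"
    then obtain S' where S': "S' \<in> P h" "i \<in> fst (f S')" unfolding d_def by (auto split: if_splits)
    then have "i \<in> S'" using f1 unfolding split_into_def by auto
    with S S' disj have "S' = S" by blast
    with S' show "i \<in> fst (f S)" by simp
  next
    assume "i \<in> fst (f S)" then show "d i = 1" using S unfolding d_def by auto
  qed
  have parts: "i \<in> fst (f S) \<or> i \<in> snd (f S)" if "S \<in> P h" "i \<in> S" for i S
    using f1 that unfolding split_into_def by auto
  have notboth: "\<not> (i \<in> fst (f S) \<and> i \<in> snd (f S))" if "S \<in> P h" for i S
    using f1 that unfolding split_into_def by force
  have sub: "fst (f S) \<subseteq> S" "snd (f S) \<subseteq> S" if "S \<in> P h" for S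
    using f1 that unfolding split_into_def by auto
  show ?thesis
  proof (intro exI conjI allI)
    show "d i = 1 \<or> d i = -1" for i unfolding d_def by auto
    fix i j
    show "cc (P (Suc h)) i j \<longleftrightarrow> cc (P h) i j \<and> d i = d j"
    proof
      assume "cc (P (Suc h)) i j"
      then obtain U where U: "U \<in> P (Suc h)" "i \<in> U" "j \<in> U" unfolding cc_def by auto
      then obtain S where S: "S \<in> P h" "U = fst (f S) \<or> U = snd (f S)" using f2 by auto
      have iS: "i \<in> S" "j \<in> S" using sub[OF S(1)] S(2) U by auto
      then have "cc (P h) i j" unfolding cc_def using S by auto
      moreover have "d i = d j"
      proof -
        have di: "d i = 1 \<or> d i = -1" "d j = 1 \<or> d j = -1" unfolding d_def by auto
        from S(2) show ?thesis
        proof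
          assume "U = fst (f S)"
          then show ?thesis using U(2,3) fst_iff[OF S(1) iS(1)] fst_iff[OF S(1) iS(2)] by simp
        next
          assume "U = snd (f S)"
          then have "i \<notin> fst (f S)" "j \<notin> fst (f S)" using U(2,3) notboth[OF S(1), of i] notboth[OF S(1), of j] by auto
          then show ?thesis using fst_iff[OF S(1) iS(1)] fst_iff[OF S(1) iS(2)] di by auto
        qed
      qed
      ultimately show "cc (P h) i j \<and> d i = d j" by simp
    next
      assume a: "cc (P h) i j \<and> d i = d j"
      then obtain S where S: "S \<in> P h" "i \<in> S" "j \<in> S" unfolding cc_def by auto
      have "(i \<in> fst (f S) \<and> j \<in> fst (f S)) \<or> (i \<in> snd (f S) \<and> j \<in> snd (f S))"
      proof (cases "i \<in> fst (f S)")
        case True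
        then have "d j = 1" using fst_iff[OF S(1,2)] a by simp
        then show ?thesis using True fst_iff[OF S(1,3)] by simp
      next
        case False
        then have "d i \<noteq> 1" using fst_iff[OF S(1,2)] by simp
        then have "d j \<noteq> 1" using a by simp
        then have "j \<notin> fst (f S)" using fst_iff[OF S(1,3)] by simp
        then show ?thesis using False parts[OF S(1,2)] parts[OF S(1,3)] by simp
      qed
      then show "cc (P (Suc h)) i j" unfolding cc_def using f2 S(1) by blast
    qed
  qed
qed


lemma bil_cong: "(\<And>i j. i < n \<Longrightarrow> j < n \<Longrightarrow> b i j = b' i j) \<Longrightarrow> bil n b w z = bil n b' w z"
  unfolding bil_def by (auto intro!: sum.cong)

lemma cc_sym: "cc Q i j = cc Q j i" unfolding cc_def by auto

lemma ap_sym: "(\<And>i j. i < n \<Longrightarrow> j < n \<Longrightarrow> a i j = a j i) \<Longrightarrow> i < n \<Longrightarrow> j < n \<Longrightarrow> ap Q a i j = ap Q a j i"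
  unfolding ap_def using cc_sym by metis

lemma ap_step:
  assumes d: "\<forall>i. d i = 1 \<or> d i = (-1::real)"
    and c: "\<forall>i j. cc Q' i j \<longleftrightarrow> cc Q i j \<and> d i = d j"
  shows "ap Q' a i j = (ap Q a i j + d i * d j * ap Q a i j) / 2"
  using d[rule_format, of i] d[rule_format, of j] c[rule_format, of i j] unfolding ap_def by auto

lemma bil_dd:
  "bil n (\<lambda>i j. (b i j + d i * d j * b i j) / 2) x x = (bil n b x x + bil n b (\<lambda>i. d i * x i) (\<lambda>i. d i * x i)) / 2"
proof -
  have "bil n b x x + bil n b (\<lambda>i. d i * x i) (\<lambda>i. d i * x i)
      = (\<Sum>i<n. \<Sum>j<n. x i * b i j * x j + d i * x i * b i j * (d j * x j))"
    unfolding bil_def by (simp add: sum.distrib)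
  then have "(bil n b x x + bil n b (\<lambda>i. d i * x i) (\<lambda>i. d i * x i)) / 2
      = (\<Sum>i<n. \<Sum>j<n. (x i * b i j * x j + d i * x i * b i j * (d j * x j)) / 2)"
    by (simp only: sum_divide_distrib)
  also have "\<dots> = bil n (\<lambda>i j. (b i j + d i * d j * b i j) / 2) x x"
    unfolding bil_def by (intro sum.cong refl) (simp add: field_simps)
  finally show ?thesis by simp
qed

lemma bil_dd2:
  "bil n (\<lambda>i j. b i j - (b i j + d i * d j * b i j) / 2) w z = (bil n b w z - bil n b (\<lambda>i. d i * w i) (\<lambda>i. d i * z i)) / 2"
proof -
  have "bil n b w z - bil n b (\<lambda>i. d i * w i) (\<lambda>i. d i * z i)
      = (\<Sum>i<n. \<Sum>j<n. w i * b i j * z j - d i * w i * b i j * (d j * z j))"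
    unfolding bil_def by (simp add: sum_subtractf)
  then have "(bil n b w z - bil n b (\<lambda>i. d i * w i) (\<lambda>i. d i * z i)) / 2
      = (\<Sum>i<n. \<Sum>j<n. (w i * b i j * z j - d i * w i * b i j * (d j * z j)) / 2)"
    by (simp only: sum_divide_distrib)
  also have "\<dots> = bil n (\<lambda>i j. b i j - (b i j + d i * d j * b i j) / 2) w z"
    unfolding bil_def by (intro sum.cong refl) (simp add: field_simps)
  finally show ?thesis by simp
qed

lemma nsq_d:
  assumes d: "\<forall>i. d i = 1 \<or> d i = (-1::real)"
  shows "nsq n (\<lambda>i. d i * x i) = nsq n x"
proof -
  have "(d i * x i)\<^sup>2 = (x i)\<^sup>2" for i using d[rule_format, of i] by auto
  then show ?thesis unfolding nsq_def by simp
qed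

lemma level_quad:
  assumes P: "nested_partitions n l P"
    and q: "\<And>x. \<alpha> * nsq n x \<le> bil n a x x \<and> bil n a x x \<le> \<beta> * nsq n x"
  shows "h \<le> l \<Longrightarrow> \<alpha> * nsq n x \<le> bil n (ap (P h) a) x x \<and> bil n (ap (P h) a) x x \<le> \<beta> * nsq n x"
proof (induction h arbitrary: x)
  case 0
  have "P 0 = {{0..<n}}" using P unfolding nested_partitions_def by (rule conjunct1)
  then have "bil n (ap (P 0) a) x x = bil n a x x"
    by (intro bil_cong) (auto simp: ap_def cc_def)
  then show ?case using q by simp
next
  case (Suc h)
  then have hl: "h < l" by simp
  obtain d where d: "\<forall>i. d i = 1 \<or> d i = (-1::real)"
    and c: "\<forall>i j. cc (P (Suc h)) i j \<longleftrightarrow> cc (P h) i j \<and> d i = d j"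
    using np_split[OF P hl] by blast
  have "bil n (ap (P (Suc h)) a) x x = bil n (\<lambda>i j. (ap (P h) a i j + d i * d j * ap (P h) a i j) / 2) x x"
    by (rule bil_cong) (rule ap_step[OF d c])
  also have "\<dots> = (bil n (ap (P h) a) x x + bil n (ap (P h) a) (\<lambda>i. d i * x i) (\<lambda>i. d i * x i)) / 2"
    by (rule bil_dd)
  finally have eq: "bil n (ap (P (Suc h)) a) x x = \<dots>" .
  have h1: "\<alpha> * nsq n x \<le> bil n (ap (P h) a) x x \<and> bil n (ap (P h) a) x x \<le> \<beta> * nsq n x"
    using Suc.IH hl by simp
  have h2: "\<alpha> * nsq n x \<le> bil n (ap (P h) a) (\<lambda>i. d i * x i) (\<lambda>i. d i * x i) \<and> bil n (ap (P h) a) (\<lambda>i. d i * x i) (\<lambda>i. d i * x i) \<le> \<beta> * nsq n x"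
    using Suc.IH[of "\<lambda>i. d i * x i"] hl nsq_d[OF d] by simp
  define p where "p = bil n (ap (P h) a) x x"
  define q where "q = bil n (ap (P h) a) (\<lambda>i. d i * x i) (\<lambda>i. d i * x i)"
  from h1 h2 have "\<alpha> * nsq n x \<le> (p + q) / 2 \<and> (p + q) / 2 \<le> \<beta> * nsq n x"
    unfolding p_def[symmetric] q_def[symmetric] add_divide_distrib by linarith
  then show ?case unfolding eq p_def q_def .
qed

lemma level_E:
  assumes P: "nested_partitions n l P" and hl: "h < l"
    and sym: "\<And>i j. i < n \<Longrightarrow> j < n \<Longrightarrow> a i j = a j i"
    and q: "\<And>x. \<alpha> * nsq n x \<le> bil n a x x \<and> bil n a x x \<le> \<beta> * nsq n x"
    and ab: "0 < \<alpha>" "\<alpha> \<le> \<beta>"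
  shows "nsq n (\<lambda>i. \<Sum>j<n. (ap (P h) a i j - ap (P (Suc h)) a i j) * z j) \<le> \<beta>\<^sup>2 * nsq n z"
proof -
  obtain d where d: "\<forall>i. d i = 1 \<or> d i = (-1::real)"
    and c: "\<forall>i j. cc (P (Suc h)) i j \<longleftrightarrow> cc (P h) i j \<and> d i = d j"
    using np_split[OF P hl] by blast
  define b where "b = ap (P h) a"
  define E where "E i j = ap (P h) a i j - ap (P (Suc h)) a i j" for i j
  have E: "E i j = b i j - (b i j + d i * d j * b i j) / 2" for i j
    unfolding E_def b_def using ap_step[OF d c] by simp
  have bsym: "\<And>i j. i < n \<Longrightarrow> j < n \<Longrightarrow> b i j = b j i" unfolding b_def by (rule ap_sym[OF sym])
  have qb: "\<alpha> * nsq n x \<le> bil n b x x \<and> bil n b x x \<le> \<beta> * nsq n x" for x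
    unfolding b_def using level_quad[OF P q, of h x] hl by simp
  have pol: "4 * bil n b w z = bil n b (\<lambda>i. w i + 1 * z i) (\<lambda>i. w i + 1 * z i) - bil n b (\<lambda>i. w i + (-1) * z i) (\<lambda>i. w i + (-1) * z i)" for w z
    unfolding bil_expand using bil_sym[of n b w z, OF bsym] by simp
  have npol: "nsq n (\<lambda>i. w i + 1 * z i) + nsq n (\<lambda>i. w i + (-1) * z i) = 2 * nsq n w + 2 * nsq n z" for w z
    unfolding nsq_expand by simp
  have dpm: "nsq n (\<lambda>i. d i * w i + t * (d i * z i)) = nsq n (\<lambda>i. w i + t * z i)" for w z t
  proof -
    have "nsq n (\<lambda>i. d i * w i + t * (d i * z i)) = nsq n (\<lambda>i. d i * (w i + t * z i))"
      by (simp add: algebra_simps)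
    then show ?thesis using nsq_d[OF d, of n "\<lambda>i. w i + t * z i"] by simp
  qed
  have Eb: "bil n E w z \<le> (\<beta> - \<alpha>) / 4 * (nsq n w + nsq n z)" for w z
  proof -
    define dw where "dw i = d i * w i" for i
    define dz where "dz i = d i * z i" for i
    have e1: "bil n E w z = (bil n b w z - bil n b dw dz) / 2"
      unfolding E dw_def dz_def by (rule bil_dd2)
    have A1: "4 * bil n b w z \<le> \<beta> * nsq n (\<lambda>i. w i + 1 * z i) - \<alpha> * nsq n (\<lambda>i. w i + (-1) * z i)"
      unfolding pol using qb[of "\<lambda>i. w i + 1 * z i"] qb[of "\<lambda>i. w i + (-1) * z i"] by linarith
    have A2: "- 4 * bil n b dw dz \<le> \<beta> * nsq n (\<lambda>i. w i + (-1) * z i) - \<alpha> * nsq n (\<lambda>i. w i + 1 * z i)"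
    proof -
      have "- 4 * bil n b dw dz = bil n b (\<lambda>i. dw i + (-1) * dz i) (\<lambda>i. dw i + (-1) * dz i) - bil n b (\<lambda>i. dw i + 1 * dz i) (\<lambda>i. dw i + 1 * dz i)"
        using pol[of dw dz] by simp
      also have "\<dots> \<le> \<beta> * nsq n (\<lambda>i. dw i + (-1) * dz i) - \<alpha> * nsq n (\<lambda>i. dw i + 1 * dz i)"
        using qb[of "\<lambda>i. dw i + 1 * dz i"] qb[of "\<lambda>i. dw i + (-1) * dz i"] by linarith
      also have "\<dots> = \<beta> * nsq n (\<lambda>i. w i + (-1) * z i) - \<alpha> * nsq n (\<lambda>i. w i + 1 * z i)"
        unfolding dw_def dz_def dpm by simp
      finally show ?thesis .
    qed
    define X where "X = nsq n (\<lambda>i. w i + 1 * z i)"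
    define Y where "Y = nsq n (\<lambda>i. w i + (-1) * z i)"
    define PP where "PP = bil n b w z"
    define QQ where "QQ = bil n b dw dz"
    have "8 * bil n E w z \<le> \<beta> * nsq n (\<lambda>i. w i + 1 * z i) - \<alpha> * nsq n (\<lambda>i. w i + (-1) * z i)
       + (\<beta> * nsq n (\<lambda>i. w i + (-1) * z i) - \<alpha> * nsq n (\<lambda>i. w i + 1 * z i))"
      unfolding e1 X_def[symmetric] Y_def[symmetric] PP_def[symmetric] QQ_def[symmetric]
      using A1[folded X_def Y_def PP_def] A2[folded X_def Y_def QQ_def] by (simp add: field_simps)
    also have "\<dots> = (\<beta> - \<alpha>) * (nsq n (\<lambda>i. w i + 1 * z i) + nsq n (\<lambda>i. w i + (-1) * z i))"
      by (simp only: algebra_simps)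
    also have "\<dots> = (\<beta> - \<alpha>) * (2 * nsq n w + 2 * nsq n z)" unfolding npol ..
    finally show ?thesis by (simp add: algebra_simps)
  qed
  define v where "v i = (\<Sum>j<n. E i j * z j)" for i
  define w where "w i = v i / \<beta>" for i
  have bpos: "\<beta> > 0" using ab by simp
  have "bil n E w z = nsq n v / \<beta>"
    unfolding bil_def w_def v_def nsq_def power2_eq_square
    by (simp add: sum_distrib_left sum_divide_distrib algebra_simps)
  moreover have "nsq n w = nsq n v / \<beta>\<^sup>2"
    unfolding nsq_def w_def by (simp add: power_divide sum_divide_distrib)
  ultimately have "nsq n v / \<beta> \<le> (\<beta> - \<alpha>) / 4 * (nsq n v / \<beta>\<^sup>2 + nsq n z)"
    using Eb[of w z] by simp
  also have "\<dots> \<le> \<beta> / 2 * (nsq n v / \<beta>\<^sup>2 + nsq n z)"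
    using ab nsq_nonneg[of n v] nsq_nonneg[of n z] by (intro mult_right_mono) auto
  finally have "nsq n v / \<beta> \<le> \<beta> / 2 * (nsq n v / \<beta>\<^sup>2 + nsq n z)" .
  then have "nsq n v \<le> \<beta> * (\<beta> / 2 * (nsq n v / \<beta>\<^sup>2 + nsq n z))"
    using bpos by (simp add: field_simps)
  also have "\<dots> = nsq n v / 2 + \<beta>\<^sup>2 * nsq n z / 2"
    using bpos by (simp add: field_simps power2_eq_square)
  finally have "nsq n v \<le> \<beta>\<^sup>2 * nsq n z" by simp
  then show ?thesis unfolding v_def E_def .
qed


definition fr :: "nat \<Rightarrow> nat \<Rightarrow> (nat \<Rightarrow> nat \<Rightarrow> real) \<Rightarrow> real" where
  "fr n1 n2 f = sqrt (\<Sum>i<n1. \<Sum>j<n2. (f i j)\<^sup>2)"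

lemma fr_L2: "fr n1 n2 f = L2_set (\<lambda>p. f (fst p) (snd p)) ({..<n1} \<times> {..<n2})"
  unfolding fr_def L2_set_def by (simp add: sum.cartesian_product case_prod_beta)

lemma fr_nonneg: "fr n1 n2 f \<ge> 0" unfolding fr_def by (auto intro!: sum_nonneg)

lemma fr_triangle: "fr n1 n2 (\<lambda>i j. f i j + g i j) \<le> fr n1 n2 f + fr n1 n2 g"
  unfolding fr_L2 by (rule L2_set_triangle_ineq)

lemma fr_uminus: "fr n1 n2 (\<lambda>i j. - f i j) = fr n1 n2 f"
  unfolding fr_def by simp

lemma fr_cong: "(\<And>i j. i < n1 \<Longrightarrow> j < n2 \<Longrightarrow> f i j = g i j) \<Longrightarrow> fr n1 n2 f = fr n1 n2 g"
  unfolding fr_def by (auto intro!: sum.cong)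

lemma fr_sum:
  assumes "finite K"
  shows "fr n1 n2 (\<lambda>i j. f i j + (\<Sum>k\<in>K. g k i j)) \<le> fr n1 n2 f + (\<Sum>k\<in>K. fr n1 n2 (g k))"
  using assms
proof (induction K rule: finite_induct)
  case empty
  then show ?case by simp
next
  case (insert a K)
  have "fr n1 n2 (\<lambda>i j. f i j + (\<Sum>k\<in>insert a K. g k i j)) = fr n1 n2 (\<lambda>i j. (f i j + (\<Sum>k\<in>K. g k i j)) + g a i j)"
    using insert by (simp add: algebra_simps)
  also have "\<dots> \<le> fr n1 n2 (\<lambda>i j. f i j + (\<Sum>k\<in>K. g k i j)) + fr n1 n2 (g a)"
    by (rule fr_triangle)
  also have "\<dots> \<le> fr n1 n2 f + (\<Sum>k\<in>K. fr n1 n2 (g k)) + fr n1 n2 (g a)"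
    using insert by simp
  finally show ?case using insert by (simp add: algebra_simps)
qed

lemma fr_cs: "(\<Sum>i<n1. \<Sum>j<n2. f i j * g i j) \<le> fr n1 n2 f * fr n1 n2 g"
proof -
  have "(\<Sum>i<n1. \<Sum>j<n2. f i j * g i j) = (\<Sum>p\<in>{..<n1} \<times> {..<n2}. f (fst p) (snd p) * g (fst p) (snd p))"
    by (simp add: sum.cartesian_product case_prod_beta)
  also have "\<dots> \<le> (\<Sum>p\<in>{..<n1} \<times> {..<n2}. \<bar>f (fst p) (snd p)\<bar> * \<bar>g (fst p) (snd p)\<bar>)"
    by (intro sum_mono) (simp add: abs_mult[symmetric])
  also have "\<dots> \<le> fr n1 n2 f * fr n1 n2 g"
    unfolding fr_L2 by (rule L2_set_mult_ineq)
  finally show ?thesis .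
qed

lemma sqrt_scale: "0 \<le> c \<Longrightarrow> 0 \<le> S \<Longrightarrow> S' \<le> c\<^sup>2 * S \<Longrightarrow> sqrt S' \<le> c * sqrt S"
  by (metis real_sqrt_le_mono real_sqrt_mult real_sqrt_abs abs_of_nonneg)

lemma fr_left:
  assumes e: "\<And>z. nsq n1 (\<lambda>i. \<Sum>k<n1. e i k * z k) \<le> \<beta>\<^sup>2 * nsq n1 z" and b: "\<beta> \<ge> 0"
  shows "fr n1 n2 (\<lambda>i j. \<Sum>k<n1. e i k * y k j) \<le> \<beta> * fr n1 n2 y"
proof -
  have "(\<Sum>i<n1. \<Sum>j<n2. (\<Sum>k<n1. e i k * y k j)\<^sup>2) = (\<Sum>j<n2. nsq n1 (\<lambda>i. \<Sum>k<n1. e i k * y k j))"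
    unfolding nsq_def by (rule sum.swap)
  also have "\<dots> \<le> (\<Sum>j<n2. \<beta>\<^sup>2 * nsq n1 (\<lambda>k. y k j))"
    by (intro sum_mono e)
  also have "\<dots> = \<beta>\<^sup>2 * (\<Sum>i<n1. \<Sum>j<n2. (y i j)\<^sup>2)"
    unfolding nsq_def by (simp add: sum_distrib_left sum.swap[of _ "{..<n2}"])
  finally show ?thesis unfolding fr_def
    by (intro sqrt_scale b) (auto intro!: sum_nonneg)
qed

lemma fr_right:
  assumes e: "\<And>z. nsq n2 (\<lambda>i. \<Sum>k<n2. e i k * z k) \<le> \<beta>\<^sup>2 * nsq n2 z" and b: "\<beta> \<ge> 0"
    and sym: "\<And>i j. i < n2 \<Longrightarrow> j < n2 \<Longrightarrow> e i j = e j i"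
  shows "fr n1 n2 (\<lambda>i j. \<Sum>k<n2. y i k * e k j) \<le> \<beta> * fr n1 n2 y"
proof -
  have "(\<Sum>i<n1. \<Sum>j<n2. (\<Sum>k<n2. y i k * e k j)\<^sup>2) = (\<Sum>i<n1. nsq n2 (\<lambda>j. \<Sum>k<n2. e j k * y i k))"
    unfolding nsq_def by (intro sum.cong refl) (simp add: sym mult.commute)
  also have "\<dots> \<le> (\<Sum>i<n1. \<beta>\<^sup>2 * nsq n2 (\<lambda>k. y i k))"
    by (intro sum_mono e)
  also have "\<dots> = \<beta>\<^sup>2 * (\<Sum>i<n1. \<Sum>j<n2. (y i j)\<^sup>2)"
    unfolding nsq_def by (simp add: sum_distrib_left)
  finally show ?thesis unfolding fr_def
    by (intro sqrt_scale b) (auto intro!: sum_nonneg)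
qed

lemma fr_lower:
  assumes q1: "\<And>x. \<alpha>1 * nsq n1 x \<le> bil n1 a1 x x"
    and q2: "\<And>x. \<alpha>2 * nsq n2 x \<le> bil n2 a2 x x"
    and pos: "0 < \<alpha>1 + \<alpha>2"
  shows "(\<alpha>1 + \<alpha>2) * fr n1 n2 y \<le> fr n1 n2 (\<lambda>i j. (\<Sum>k<n1. a1 i k * y k j) + (\<Sum>k<n2. y i k * a2 k j))"
proof -
  define S where "S = (\<Sum>i<n1. \<Sum>j<n2. (y i j)\<^sup>2)"
  have S0: "S \<ge> 0" unfolding S_def by (auto intro!: sum_nonneg)
  have i1: "(\<Sum>i<n1. \<Sum>j<n2. y i j * (\<Sum>k<n1. a1 i k * y k j)) = (\<Sum>j<n2. bil n1 a1 (\<lambda>i. y i j) (\<lambda>i. y i j))"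
    unfolding bil_def by (subst sum.swap) (simp add: sum_distrib_left algebra_simps)
  have i2: "(\<Sum>i<n1. \<Sum>j<n2. y i j * (\<Sum>k<n2. y i k * a2 k j)) = (\<Sum>i<n1. bil n2 a2 (\<lambda>j. y i j) (\<lambda>j. y i j))"
  proof (intro sum.cong refl)
    fix i
    have "(\<Sum>j<n2. y i j * (\<Sum>k<n2. y i k * a2 k j)) = (\<Sum>j<n2. \<Sum>k<n2. y i k * a2 k j * y i j)"
      by (simp add: sum_distrib_left algebra_simps)
    also have "\<dots> = bil n2 a2 (\<lambda>j. y i j) (\<lambda>j. y i j)"
      unfolding bil_def by (rule sum.swap)
    finally show "(\<Sum>j<n2. y i j * (\<Sum>k<n2. y i k * a2 k j)) = bil n2 a2 (\<lambda>j. y i j) (\<lambda>j. y i j)" .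
  qed
  have "(\<alpha>1 + \<alpha>2) * S = (\<Sum>j<n2. \<alpha>1 * nsq n1 (\<lambda>i. y i j)) + (\<Sum>i<n1. \<alpha>2 * nsq n2 (\<lambda>j. y i j))"
    unfolding S_def nsq_def by (simp add: sum_distrib_left algebra_simps sum.swap[of _ "{..<n2}"] sum.distrib)
  also have "\<dots> \<le> (\<Sum>j<n2. bil n1 a1 (\<lambda>i. y i j) (\<lambda>i. y i j)) + (\<Sum>i<n1. bil n2 a2 (\<lambda>j. y i j) (\<lambda>j. y i j))"
    by (intro add_mono sum_mono q1 q2)
  also have "\<dots> = (\<Sum>i<n1. \<Sum>j<n2. y i j * ((\<Sum>k<n1. a1 i k * y k j) + (\<Sum>k<n2. y i k * a2 k j)))"
    unfolding i1[symmetric] i2[symmetric] by (simp add: sum.distrib algebra_simps)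
  also have "\<dots> \<le> fr n1 n2 y * fr n1 n2 (\<lambda>i j. (\<Sum>k<n1. a1 i k * y k j) + (\<Sum>k<n2. y i k * a2 k j))"
    by (rule fr_cs)
  finally have main: "(\<alpha>1 + \<alpha>2) * S \<le> sqrt S * fr n1 n2 (\<lambda>i j. (\<Sum>k<n1. a1 i k * y k j) + (\<Sum>k<n2. y i k * a2 k j))"
    unfolding fr_def S_def .
  show ?thesis
  proof (cases "S = 0")
    case True
    then show ?thesis unfolding fr_def S_def[symmetric] using fr_nonneg unfolding fr_def by simp
  next
    case False
    then have Sp: "sqrt S > 0" using S0 by simp
    have "(\<alpha>1 + \<alpha>2) * S = sqrt S * ((\<alpha>1 + \<alpha>2) * sqrt S)" using S0 by (simp add: algebra_simps)
    with main Sp show ?thesis unfolding fr_def S_def[symmetric] by (simp add: mult_le_cancel_left_pos)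
  qed
qed


lemma mult_entry:
  assumes "A \<in> carrier_mat m n" "B \<in> carrier_mat n p" "i < m" "j < p"
  shows "(A * B) $$ (i, j) = (\<Sum>k<n. A $$ (i, k) * B $$ (k, j))"
  using assms by (simp add: scalar_prod_def lessThan_atLeast0)

lemma bp_carrier: "A \<in> carrier_mat n n \<Longrightarrow> block_part Q A \<in> carrier_mat n n"
  unfolding block_part_def by auto

lemma bp_entry: "A \<in> carrier_mat n n \<Longrightarrow> i < n \<Longrightarrow> j < n \<Longrightarrow> block_part Q A $$ (i, j) = ap Q (\<lambda>i j. A $$ (i, j)) i j"
  unfolding block_part_def ap_def cc_def by auto

lemma frob_fr: "M \<in> carrier_mat n1 n2 \<Longrightarrow> frob_norm M = fr n1 n2 (\<lambda>i j. M $$ (i, j))"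
  unfolding frob_norm_def fr_def by auto

lemma eigen_of:
  assumes A: "A \<in> carrier_mat n n" and y: "nsq n y = 1"
    and ev: "\<forall>i<n. (\<Sum>j<n. A $$ (i, j) * y j) = \<mu> * y i"
  shows "eigenvalue A \<mu>"
proof -
  define v where "v = vec n y"
  have "v \<noteq> 0\<^sub>v n"
  proof
    assume "v = 0\<^sub>v n"
    then have "\<forall>i<n. y i = 0" unfolding v_def by (metis index_vec index_zero_vec(1))
    then have "nsq n y = 0" unfolding nsq_def by simp
    with y show False by simp
  qed
  moreover have "A *\<^sub>v v = \<mu> \<cdot>\<^sub>v v"
    by (rule eq_vecI) (use A ev in \<open>auto simp: v_def scalar_prod_def lessThan_atLeast0\<close>)
  moreover have "v \<in> carrier_vec n" unfolding v_def by simp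
  ultimately show ?thesis using A unfolding eigenvalue_def eigenvector_def by (intro exI[of _ v]) simp
qed

lemma spec_bounds:
  assumes A: "A \<in> carrier_mat n n" and s: "sym_mat A" and sp: "spectrum_in A \<alpha> \<beta>"
  shows "\<alpha> * nsq n x \<le> bil n (\<lambda>i j. A $$ (i, j)) x x \<and> bil n (\<lambda>i j. A $$ (i, j)) x x \<le> \<beta> * nsq n x"
proof (cases "n = 0")
  case True
  then show ?thesis unfolding nsq_def bil_def by simp
next
  case False
  then have n: "0 < n" by simp
  have sym: "A $$ (i, j) = A $$ (j, i)" if "i < n" "j < n" for i j
  proof -
    have "A $$ (i, j) = transpose_mat A $$ (i, j)" using s unfolding sym_mat_def by simp
    also have "\<dots> = A $$ (j, i)" using A that by simp
    finally show ?thesis .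
  qed
  obtain \<mu> y where y1: "nsq n y = 1" and ev: "\<forall>i<n. (\<Sum>j<n. A $$ (i, j) * y j) = \<mu> * y i"
    and low: "\<forall>x. \<mu> * nsq n x \<le> bil n (\<lambda>i j. A $$ (i, j)) x x"
    using min_eig[of n "\<lambda>i j. A $$ (i, j)", OF n sym] by blast
  have "\<alpha> \<le> \<mu>" using eigen_of[OF A y1 ev] sp unfolding spectrum_in_def by blast
  then have L: "\<alpha> * nsq n x \<le> bil n (\<lambda>i j. A $$ (i, j)) x x"
    using low[rule_format, of x] nsq_nonneg[of n x] mult_right_mono[of \<alpha> \<mu> "nsq n x"] by linarith
  have sym': "- A $$ (i, j) = - A $$ (j, i)" if "i < n" "j < n" for i j using sym[OF that] by simp
  obtain \<mu>' y' where y1': "nsq n y' = 1" and ev': "\<forall>i<n. (\<Sum>j<n. - A $$ (i, j) * y' j) = \<mu>' * y' i"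
    and low': "\<forall>x. \<mu>' * nsq n x \<le> bil n (\<lambda>i j. - A $$ (i, j)) x x"
    using min_eig[of n "\<lambda>i j. - A $$ (i, j)", OF n sym'] by blast
  have "\<forall>i<n. (\<Sum>j<n. A $$ (i, j) * y' j) = (- \<mu>') * y' i"
  proof (intro allI impI)
    fix i assume "i < n"
    then have "(\<Sum>j<n. - A $$ (i, j) * y' j) = \<mu>' * y' i" using ev' by blast
    then show "(\<Sum>j<n. A $$ (i, j) * y' j) = (- \<mu>') * y' i" by (simp add: sum_negf)
  qed
  from eigen_of[OF A y1' this] sp have "- \<mu>' \<le> \<beta>" unfolding spectrum_in_def by blast
  moreover have "bil n (\<lambda>i j. - A $$ (i, j)) x x = - bil n (\<lambda>i j. A $$ (i, j)) x x"
    unfolding bil_def by (simp add: sum_negf)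
  ultimately have U: "bil n (\<lambda>i j. A $$ (i, j)) x x \<le> \<beta> * nsq n x"
    using low'[rule_format, of x] nsq_nonneg[of n x]
    using mult_right_mono[of "- \<mu>'" \<beta> "nsq n x"] by linarith
  from L U show ?thesis by simp
qed


lemma xacc_carrier: "Xl \<in> carrier_mat n1 n2 \<Longrightarrow> Xacc l Xl dX h \<in> carrier_mat n1 n2"
  unfolding Xacc_def msum_def by auto

lemma xacc_entry: "Xl \<in> carrier_mat n1 n2 \<Longrightarrow> i < n1 \<Longrightarrow> j < n2 \<Longrightarrow>
  Xacc l Xl dX h $$ (i, j) = Xl $$ (i, j) + (\<Sum>k\<in>{h..<l}. dX k $$ (i, j))"
  unfolding Xacc_def msum_def by auto

lemma msum_entry: "i < n1 \<Longrightarrow> j < n2 \<Longrightarrow> msum n1 n2 F K $$ (i, j) = (\<Sum>k\<in>K. F k $$ (i, j))"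
  unfolding msum_def by auto

lemma lhs_entry:
  assumes "A1 \<in> carrier_mat n1 n1" "A2 \<in> carrier_mat n2 n2" "M \<in> carrier_mat n1 n2" "i < n1" "j < n2"
  shows "(block_part Q1 A1 * M + M * block_part Q2 A2) $$ (i, j)
    = (\<Sum>k<n1. ap Q1 (\<lambda>i j. A1 $$ (i, j)) i k * M $$ (k, j)) + (\<Sum>k<n2. M $$ (i, k) * ap Q2 (\<lambda>i j. A2 $$ (i, j)) k j)"
proof -
  have c1: "block_part Q1 A1 \<in> carrier_mat n1 n1" "block_part Q2 A2 \<in> carrier_mat n2 n2"
    using assms bp_carrier by auto
  have "(block_part Q1 A1 * M + M * block_part Q2 A2) $$ (i, j) = (block_part Q1 A1 * M) $$ (i, j) + (M * block_part Q2 A2) $$ (i, j)"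
    using assms c1 by simp
  also have "\<dots> = (\<Sum>k<n1. block_part Q1 A1 $$ (i, k) * M $$ (k, j)) + (\<Sum>k<n2. M $$ (i, k) * block_part Q2 A2 $$ (k, j))"
    using mult_entry[OF c1(1) assms(3,4,5)] mult_entry[OF assms(3) c1(2) assms(4,5)] by simp
  also have "\<dots> = (\<Sum>k<n1. ap Q1 (\<lambda>i j. A1 $$ (i, j)) i k * M $$ (k, j)) + (\<Sum>k<n2. M $$ (i, k) * ap Q2 (\<lambda>i j. A2 $$ (i, j)) k j)"
    using assms bp_entry by (intro arg_cong2[where f="(+)"] sum.cong refl) auto
  finally show ?thesis .
qed


theorem lemma3p1:
  fixes n1 n2 l :: nat
    and A1 A2 B Xl :: "real mat"
    and dX :: "nat \<Rightarrow> real mat"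
    and P1 P2 :: "nat \<Rightarrow> nat set set"
    and \<alpha>1 \<beta>1 \<alpha>2 \<beta>2 \<epsilon> \<kappa> :: real
    and Xi R :: "nat \<Rightarrow> real mat"
  assumes A1: "A1 \<in> carrier_mat n1 n1" and A2: "A2 \<in> carrier_mat n2 n2"
    and B: "B \<in> carrier_mat n1 n2"
    and pd1: "pos_def_mat A1" and pd2: "pos_def_mat A2"
    and sp1: "spectrum_in A1 \<alpha>1 \<beta>1" and sp2: "spectrum_in A2 \<alpha>2 \<beta>2"
    and a1: "0 < \<alpha>1" "\<alpha>1 \<le> \<beta>1" and a2: "0 < \<alpha>2" "\<alpha>2 \<le> \<beta>2"
    and eps: "\<epsilon> > 0"
    and kappa: "\<kappa> = (\<beta>1 + \<beta>2) / (\<alpha>1 + \<alpha>2)"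
    and keps: "\<kappa> * \<epsilon> < 1"
    and P1: "nested_partitions n1 l P1" and P2: "nested_partitions n2 l P2"
    and Xl: "Xl \<in> carrier_mat n1 n2"
    and dX: "\<And>h. h < l \<Longrightarrow> dX h \<in> carrier_mat n1 n2"
    and Rl: "R l = block_part (P1 l) A1 * Xl + Xl * block_part (P2 l) A2 - B"
    and Xi_def: "\<And>h. h < l \<Longrightarrow> Xi h =
        - ((block_part (P1 h) A1 - block_part (P1 (Suc h)) A1) * Xacc l Xl dX (Suc h))
        - Xacc l Xl dX (Suc h) * (block_part (P2 h) A2 - block_part (P2 (Suc h)) A2)"
    and Rh: "\<And>h. h < l \<Longrightarrow> R h =
        block_part (P1 h) A1 * dX h + dX h * block_part (P2 h) A2 - Xi h"
    and resl: "frob_norm (R l) \<le> \<epsilon> * frob_norm B"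
    and resh: "\<And>h. h < l \<Longrightarrow> frob_norm (R h) \<le> \<epsilon> * frob_norm (Xi h)"
  shows "\<forall>h\<le>l.
     block_part (P1 h) A1 * Xacc l Xl dX h + Xacc l Xl dX h * block_part (P2 h) A2
       = B + msum n1 n2 R {h..l}
     \<and> frob_norm (R h) \<le> \<kappa> * \<epsilon> * (1 + \<epsilon>) * (1 + \<kappa> * \<epsilon>) powi (int l - int h - 1) * frob_norm B"
proof -
  define a1 where "a1 i j = A1 $$ (i, j)" for i j
  define a2 where "a2 i j = A2 $$ (i, j)" for i j
  define b1 where "b1 h = ap (P1 h) a1" for h
  define b2 where "b2 h = ap (P2 h) a2" for h
  define X where "X h = Xacc l Xl dX h" for h
  define xe where "xe h i j = X h $$ (i, j)" for h i j
  define lhs where "lhs h f i j = (\<Sum>k<n1. b1 h i k * f k j) + (\<Sum>k<n2. f i k * b2 h k j)"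
    for h and f :: "nat \<Rightarrow> nat \<Rightarrow> real" and i j
  have Xc: "X h \<in> carrier_mat n1 n2" for h unfolding X_def by (rule xacc_carrier[OF Xl])
  have sm1: "sym_mat A1" using pd1 unfolding pos_def_mat_def by simp
  have sm2: "sym_mat A2" using pd2 unfolding pos_def_mat_def by simp
  have q1: "\<And>x. \<alpha>1 * nsq n1 x \<le> bil n1 a1 x x \<and> bil n1 a1 x x \<le> \<beta>1 * nsq n1 x"
    unfolding a1_def by (rule spec_bounds[OF A1 sm1 sp1])
  have q2: "\<And>x. \<alpha>2 * nsq n2 x \<le> bil n2 a2 x x \<and> bil n2 a2 x x \<le> \<beta>2 * nsq n2 x"
    unfolding a2_def by (rule spec_bounds[OF A2 sm2 sp2])
  have syma1: "a1 i j = a1 j i" if "i < n1" "j < n1" for i j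
  proof -
    have "A1 $$ (i, j) = transpose_mat A1 $$ (i, j)" using sm1 unfolding sym_mat_def by simp
    also have "\<dots> = A1 $$ (j, i)" using A1 that by simp
    finally show ?thesis unfolding a1_def .
  qed
  have syma2: "a2 i j = a2 j i" if "i < n2" "j < n2" for i j
  proof -
    have "A2 $$ (i, j) = transpose_mat A2 $$ (i, j)" using sm2 unfolding sym_mat_def by simp
    also have "\<dots> = A2 $$ (j, i)" using A2 that by simp
    finally show ?thesis unfolding a2_def .
  qed
  have bc1: "block_part (P1 h) A1 \<in> carrier_mat n1 n1" for h using bp_carrier[OF A1] .
  have bc2: "block_part (P2 h) A2 \<in> carrier_mat n2 n2" for h using bp_carrier[OF A2] .
  have be1: "block_part (P1 h) A1 $$ (i, k) = b1 h i k" if "i < n1" "k < n1" for h i k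
    unfolding b1_def a1_def using bp_entry[OF A1 that] .
  have be2: "block_part (P2 h) A2 $$ (i, k) = b2 h i k" if "i < n2" "k < n2" for h i k
    unfolding b2_def a2_def using bp_entry[OF A2 that] .
  have lent: "(block_part (P1 h) A1 * M + M * block_part (P2 h) A2) $$ (i, j) = lhs h (\<lambda>i j. M $$ (i, j)) i j"
    if "M \<in> carrier_mat n1 n2" "i < n1" "j < n2" for h M i j
    unfolding lhs_def b1_def b2_def a1_def a2_def using lhs_entry[OF A1 A2 that] .
  have lhs_cong: "lhs h f i j = lhs h g i j"
    if "\<And>i j. i < n1 \<Longrightarrow> j < n2 \<Longrightarrow> f i j = g i j" "i < n1" "j < n2" for h f g i j
    unfolding lhs_def using that by (auto intro!: arg_cong2[where f="(+)"] sum.cong)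
  have lhs_add: "lhs h (\<lambda>i j. f i j + g i j) i j = lhs h f i j + lhs h g i j" for h f g i j
    unfolding lhs_def by (simp add: sum.distrib algebra_simps)
  have Xic: "Xi h \<in> carrier_mat n1 n2" if "h < l" for h
    unfolding Xi_def[OF that] X_def[symmetric]
    by (rule minus_carrier_mat[OF mult_carrier_mat[OF Xc minus_carrier_mat[OF bc2]]])
  have Rc: "R k \<in> carrier_mat n1 n2" if "k \<le> l" for k
  proof (cases "k = l")
    case True
    show ?thesis unfolding True Rl by (rule minus_carrier_mat[OF B])
  next
    case False
    with that have "k < l" by simp
    then show ?thesis unfolding Rh[OF \<open>k < l\<close>] by (rule minus_carrier_mat[OF Xic])
  qed
  have Rl_ent: "R l $$ (i, j) = lhs l (\<lambda>i j. Xl $$ (i, j)) i j - B $$ (i, j)" if "i < n1" "j < n2" for i j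
  proof -
    have "R l $$ (i, j) = (block_part (P1 l) A1 * Xl + Xl * block_part (P2 l) A2) $$ (i, j) - B $$ (i, j)"
      unfolding Rl using that B bc1 bc2 Xl by simp
    then show ?thesis using lent[OF Xl that] by simp
  qed
  have Xi_ent: "Xi h $$ (i, j) = lhs (Suc h) (xe (Suc h)) i j - lhs h (xe (Suc h)) i j"
    if hl: "h < l" and ij: "i < n1" "j < n2" for h i j
  proof -
    have E1c: "block_part (P1 h) A1 - block_part (P1 (Suc h)) A1 \<in> carrier_mat n1 n1" by (rule minus_carrier_mat[OF bc1])
    have E2c: "block_part (P2 h) A2 - block_part (P2 (Suc h)) A2 \<in> carrier_mat n2 n2" by (rule minus_carrier_mat[OF bc2])
    have "Xi h $$ (i, j) = - ((block_part (P1 h) A1 - block_part (P1 (Suc h)) A1) * X (Suc h)) $$ (i, j)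
        - (X (Suc h) * (block_part (P2 h) A2 - block_part (P2 (Suc h)) A2)) $$ (i, j)"
      unfolding Xi_def[OF hl] X_def[symmetric]
      using ij carrier_matD[OF mult_carrier_mat[OF E1c Xc]] carrier_matD[OF mult_carrier_mat[OF Xc E2c]] by simp
    also have "\<dots> = - (\<Sum>k<n1. (b1 h i k - b1 (Suc h) i k) * xe (Suc h) k j)
        - (\<Sum>k<n2. xe (Suc h) i k * (b2 h k j - b2 (Suc h) k j))"
      unfolding mult_entry[OF E1c Xc ij] mult_entry[OF Xc E2c ij] xe_def
      using ij be1 be2 carrier_matD[OF bc1] carrier_matD[OF bc2] by (auto intro!: arg_cong2[where f="(-)"] sum.cong)
    also have "\<dots> = lhs (Suc h) (xe (Suc h)) i j - lhs h (xe (Suc h)) i j"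
      unfolding lhs_def by (simp add: left_diff_distrib right_diff_distrib sum_subtractf)
    finally show ?thesis .
  qed
  have Rh_ent: "R h $$ (i, j) = lhs h (\<lambda>i j. dX h $$ (i, j)) i j - Xi h $$ (i, j)"
    if hl: "h < l" and ij: "i < n1" "j < n2" for h i j
  proof -
    have "R h $$ (i, j) = (block_part (P1 h) A1 * dX h + dX h * block_part (P2 h) A2) $$ (i, j) - Xi h $$ (i, j)"
      unfolding Rh[OF hl] using ij bc1 bc2 dX[OF hl] Xic[OF hl] by simp
    then show ?thesis using lent[OF dX[OF hl] ij] by simp
  qed
  have EQ: "\<forall>i<n1. \<forall>j<n2. lhs h (xe h) i j = B $$ (i, j) + (\<Sum>k\<in>{h..l}. R k $$ (i, j))"
    if "h \<le> l" for h
    using that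
  proof (induction rule: inc_induct)
    case base
    show ?case
    proof (intro allI impI)
      fix i j assume ij: "i < n1" "j < n2"
      have "lhs l (xe l) i j = lhs l (\<lambda>i j. Xl $$ (i, j)) i j"
        by (rule lhs_cong[OF _ ij]) (simp add: xe_def X_def xacc_entry[OF Xl])
      then show "lhs l (xe l) i j = B $$ (i, j) + (\<Sum>k\<in>{l..l}. R k $$ (i, j))"
        using Rl_ent[OF ij] by simp
    qed
  next
    case (step h)
    show ?case
    proof (intro allI impI)
      fix i j assume ij: "i < n1" "j < n2"
      have "lhs h (xe h) i j = lhs h (\<lambda>i j. xe (Suc h) i j + dX h $$ (i, j)) i j"
        by (rule lhs_cong[OF _ ij]) (simp add: xe_def X_def xacc_entry[OF Xl] sum.atLeast_Suc_lessThan[OF step(2)])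
      also have "\<dots> = lhs h (xe (Suc h)) i j + lhs h (\<lambda>i j. dX h $$ (i, j)) i j" by (rule lhs_add)
      also have "\<dots> = lhs (Suc h) (xe (Suc h)) i j + R h $$ (i, j)"
        using Rh_ent[OF step(2) ij] Xi_ent[OF step(2) ij] by simp
      also have "\<dots> = B $$ (i, j) + (\<Sum>k\<in>{Suc h..l}. R k $$ (i, j)) + R h $$ (i, j)"
        using step(3) ij by simp
      also have "\<dots> = B $$ (i, j) + (\<Sum>k\<in>{h..l}. R k $$ (i, j))"
        using step(2) by (simp add: sum.atLeast_Suc_atMost)
      finally show "lhs h (xe h) i j = B $$ (i, j) + (\<Sum>k\<in>{h..l}. R k $$ (i, j))" .
    qed
  qed
  have fB0: "frob_norm B \<ge> 0" unfolding frob_norm_def by (auto intro!: sum_nonneg)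
  have kap1: "\<kappa> \<ge> 1" unfolding kappa using a1 a2 by simp
  have XiN: "frob_norm (Xi h) \<le> \<kappa> * (frob_norm B + (\<Sum>k\<in>{Suc h..l}. frob_norm (R k)))" if hl: "h < l" for h
  proof -
    define Y where "Y = xe (Suc h)"
    define E1p where "E1p i j = (\<Sum>k<n1. (b1 h i k - b1 (Suc h) i k) * Y k j)" for i j
    define E2p where "E2p i j = (\<Sum>k<n2. Y i k * (b2 h k j - b2 (Suc h) k j))" for i j
    have "frob_norm (Xi h) = fr n1 n2 (\<lambda>i j. Xi h $$ (i, j))" by (rule frob_fr[OF Xic[OF hl]])
    also have "\<dots> = fr n1 n2 (\<lambda>i j. - (E1p i j + E2p i j))"
      by (rule fr_cong) (simp add: Xi_ent[OF hl] lhs_def E1p_def E2p_def Y_def left_diff_distrib right_diff_distrib sum_subtractf)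
    also have "\<dots> = fr n1 n2 (\<lambda>i j. E1p i j + E2p i j)" by (rule fr_uminus)
    also have "\<dots> \<le> fr n1 n2 E1p + fr n1 n2 E2p" by (rule fr_triangle)
    also have "\<dots> \<le> \<beta>1 * fr n1 n2 Y + \<beta>2 * fr n1 n2 Y"
    proof (rule add_mono)
      show "fr n1 n2 E1p \<le> \<beta>1 * fr n1 n2 Y"
        unfolding E1p_def
        by (rule fr_left) (use level_E[OF P1 hl syma1 q1 a1] a1 in \<open>auto simp: b1_def\<close>)
      show "fr n1 n2 E2p \<le> \<beta>2 * fr n1 n2 Y"
        unfolding E2p_def
      proof (rule fr_right)
        show "nsq n2 (\<lambda>i. \<Sum>k<n2. (b2 h i k - b2 (Suc h) i k) * z k) \<le> \<beta>2\<^sup>2 * nsq n2 z" for z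
          using level_E[OF P2 hl syma2 q2 a2] unfolding b2_def by simp
        show "\<beta>2 \<ge> 0" using a2 by simp
        show "b2 h i j - b2 (Suc h) i j = b2 h j i - b2 (Suc h) j i" if "i < n2" "j < n2" for i j
          unfolding b2_def using ap_sym[of n2 a2, OF syma2 that] by simp
      qed
    qed
    also have "\<dots> = (\<beta>1 + \<beta>2) / (\<alpha>1 + \<alpha>2) * ((\<alpha>1 + \<alpha>2) * fr n1 n2 Y)"
      using a1 a2 by (simp add: field_simps)
    also have "\<dots> \<le> \<kappa> * fr n1 n2 (lhs (Suc h) Y)"
      unfolding kappa[symmetric]
    proof (rule mult_left_mono)
      show "0 \<le> \<kappa>" using kap1 by simp
      show "(\<alpha>1 + \<alpha>2) * fr n1 n2 Y \<le> fr n1 n2 (lhs (Suc h) Y)"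
        unfolding lhs_def
        by (rule fr_lower) (use level_quad[OF P1 q1, of "Suc h"] level_quad[OF P2 q2, of "Suc h"] hl a1 a2 in \<open>auto simp: b1_def b2_def\<close>)
    qed
    also have "fr n1 n2 (lhs (Suc h) Y) = fr n1 n2 (\<lambda>i j. B $$ (i, j) + (\<Sum>k\<in>{Suc h..l}. R k $$ (i, j)))"
      by (rule fr_cong) (use EQ[of "Suc h"] hl in \<open>auto simp: Y_def\<close>)
    also have "\<dots> \<le> fr n1 n2 (\<lambda>i j. B $$ (i, j)) + (\<Sum>k\<in>{Suc h..l}. fr n1 n2 (\<lambda>i j. R k $$ (i, j)))"
      by (rule fr_sum) simp
    also have "\<dots> = frob_norm B + (\<Sum>k\<in>{Suc h..l}. frob_norm (R k))"
      using frob_fr[OF B] frob_fr[OF Rc] by simp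
    finally show ?thesis using kap1 by (simp add: mult_left_mono)
  qed
  define c where "c = \<kappa> * \<epsilon>"
  define T where "T h = frob_norm B + (\<Sum>k\<in>{h..l}. frob_norm (R k))" for h
  have c0: "c \<ge> 0" unfolding c_def using kap1 eps by simp
  have BND: "T h \<le> (1 + \<epsilon>) * (1 + c) ^ (l - h) * frob_norm B
      \<and> frob_norm (R h) \<le> \<kappa> * \<epsilon> * (1 + \<epsilon>) * (1 + \<kappa> * \<epsilon>) powi (int l - int h - 1) * frob_norm B"
    if "h \<le> l" for h
    using that
  proof (induction rule: inc_induct)
    case base
    have T: "T l \<le> (1 + \<epsilon>) * frob_norm B" unfolding T_def using resl by (simp add: algebra_simps)
    have "\<epsilon> * (1 + c) \<le> c * (1 + \<epsilon>)" unfolding c_def using kap1 eps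
      by (simp add: algebra_simps mult_right_mono)
    then have "\<epsilon> \<le> c * (1 + \<epsilon>) / (1 + c)" using c0 by (simp add: field_simps)
    then have "\<epsilon> * frob_norm B \<le> c * (1 + \<epsilon>) / (1 + c) * frob_norm B" using fB0 by (rule mult_right_mono)
    then have "frob_norm (R l) \<le> \<kappa> * \<epsilon> * (1 + \<epsilon>) * (1 + \<kappa> * \<epsilon>) powi (int l - int l - 1) * frob_norm B"
      using resl unfolding c_def by (simp add: field_simps)
    with T show ?case by simp
  next
    case (step h)
    have IH: "T (Suc h) \<le> (1 + \<epsilon>) * (1 + c) ^ (l - Suc h) * frob_norm B" using step(3) by simp
    have "frob_norm (R h) \<le> \<epsilon> * frob_norm (Xi h)" using resh[OF step(2)] .
    also have "\<dots> \<le> \<epsilon> * (\<kappa> * T (Suc h))" using XiN[OF step(2)] eps unfolding T_def by simp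
    finally have RT: "frob_norm (R h) \<le> c * T (Suc h)" unfolding c_def by (simp add: algebra_simps)
    also have "\<dots> \<le> c * ((1 + \<epsilon>) * (1 + c) ^ (l - Suc h) * frob_norm B)" using IH c0 by (rule mult_left_mono)
    finally have R1: "frob_norm (R h) \<le> c * ((1 + \<epsilon>) * (1 + c) ^ (l - Suc h) * frob_norm B)" .
    have pw: "int l - int h - 1 = int (l - Suc h)" using step(2) by simp
    have "T h = frob_norm (R h) + T (Suc h)" unfolding T_def using step(2) by (simp add: sum.atLeast_Suc_atMost)
    also have "\<dots> \<le> (1 + c) * T (Suc h)" using RT by (simp add: algebra_simps)
    also have "\<dots> \<le> (1 + c) * ((1 + \<epsilon>) * (1 + c) ^ (l - Suc h) * frob_norm B)" using IH c0 by (intro mult_left_mono) auto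
    also have "\<dots> = (1 + \<epsilon>) * (1 + c) ^ (l - h) * frob_norm B"
    proof -
      have "l - h = Suc (l - Suc h)" using step(2) by simp
      then show ?thesis by (simp add: algebra_simps)
    qed
    finally show ?case using R1 unfolding pw c_def by (simp add: algebra_simps)
  qed
  show ?thesis
  proof (intro allI impI conjI)
    fix h assume hl: "h \<le> l"
    show "frob_norm (R h) \<le> \<kappa> * \<epsilon> * (1 + \<epsilon>) * (1 + \<kappa> * \<epsilon>) powi (int l - int h - 1) * frob_norm B"
      using BND[OF hl] by simp
    show "block_part (P1 h) A1 * Xacc l Xl dX h + Xacc l Xl dX h * block_part (P2 h) A2 = B + msum n1 n2 R {h..l}"
    proof (rule eq_matI)
      fix i j assume ij: "i < dim_row (B + msum n1 n2 R {h..l})" "j < dim_col (B + msum n1 n2 R {h..l})"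
      then have ij': "i < n1" "j < n2" unfolding msum_def by auto
      show "(block_part (P1 h) A1 * Xacc l Xl dX h + Xacc l Xl dX h * block_part (P2 h) A2) $$ (i, j) = (B + msum n1 n2 R {h..l}) $$ (i, j)"
        using lent[OF Xc ij', of h h] EQ[OF hl] ij' B unfolding X_def xe_def
        by (simp add: msum_entry msum_def)
    qed (use bc1 bc2 Xc B in \<open>auto simp: X_def msum_def\<close>)
  qed
qed

end
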